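(* For positive integers $D_1,D_2$ and an integer $u$, let \[ \mathcal{R}'(u,D_1,D_2)=\max_{\substack{(a,D_1)=1\\(b,D_2)=1}}\ \sum_{t\bmod D_1}\big|\widehat S(a,bu,t,1;D_1,D_2)\big|. \] Then $\mathcal{R}'(u,D_1,D_2)=\mathcal{R}(u,D_2,D_1)$.
   Context: Notation: $e(x)=e^{2\pi ix}$. For integers $m_1,m_2,n_1,n_2$ and positive integers $D_1,D_2$, the $GL_3$ Kloosterman sum is \[ S(m_1,m_2,n_1,n_2;D_1,D_2)=\sum e\Big(\frac{m_1B_1+n_1(Y_1D_2-Z_1B_2)}{D_1}\Big)e\Big(\frac{m_2B_2+n_2(Y_2D_1-Z_2B_1)}{D_2}\Big), \] the sum over $B_1,C_1 \bmod D_1$, $B_2,C_2\bmod D_2$ with $\gcd(B_1,C_1,D_1)=\gcd(B_2,C_2,D_2)=1$ and $D_1C_2+B_1B_2+C_1D_2\equiv 0\pmod{D_1D_2}$, where $Y_1B_1+Z_1C_1\equiv 1\pmod{D_1}$, $Y_2B_2+Z_2C_2\equiv1\pmod{D_2}$ (independent of choices). For integers $a,b$ with $(a,D_1)=(b,D_2)=1$ and integers $u,t$, \[ \widehat S(a,u,t,b;D_1,D_2)=\frac{1}{D_1D_2}\sum_{x\bmod D_1}\sum_{y\bmod D_2}S(a,y,x,b;D_1,D_2)\,e\Big(\frac{-xt}{D_1}\Big)e\Big(\frac{-yu}{D_2}\Big), \] and $\mathcal{R}(t,D_1,D_2)=\max_{(ab,D_1)=1}\sum_{u\bmod D_2}|\widehat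 S(a,u,bt,1;D_1,D_2)|$ (maximum over integers $a,b$ coprime to $D_1$). *)

theory Defs
  imports "HOL-Analysis.Analysis" "HOL-Number_Theory.Number_Theory"
begin

definition ee :: "real \<Rightarrow> complex" where
  "ee x = exp (2 * of_real pi * \<i> * of_real x)"

text \<open>A choice of (Y, Z) with Y*B + Z*C = 1 mod D (exists when gcd(B,C,D) = 1;
  the Kloosterman sum is independent of the choice).\<close>
definition bezout_pair :: "int \<Rightarrow> int \<Rightarrow> int \<Rightarrow> int \<times> int" where
  "bezout_pair B C D = (SOME (Y, Z). [Y * B + Z * C = 1] (mod D))"

definition kl_index :: "int \<Rightarrow> int \<Rightarrow> (int \<times> int \<times> int \<times> int) set" where
  "kl_index D1 D2 = {(B1, C1, B2, C2).
      B1 \<in> {0..<D1} \<and> C1 \<in> {0..<D1} \<and> B2 \<in> {0..<D2} \<and> C2 \<in> {0..<D2} \<and>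
      gcd B1 (gcd C1 D1) = 1 \<and> gcd B2 (gcd C2 D2) = 1 \<and>
      [D1 * C2 + B1 * B2 + C1 * D2 = 0] (mod (D1 * D2))}"

definition kl3 :: "int \<Rightarrow> int \<Rightarrow> int \<Rightarrow> int \<Rightarrow> int \<Rightarrow> int \<Rightarrow> complex" where
  "kl3 m1 m2 n1 n2 D1 D2 =
    (\<Sum>(B1, C1, B2, C2) \<in> kl_index D1 D2.
       let (Y1, Z1) = bezout_pair B1 C1 D1; (Y2, Z2) = bezout_pair B2 C2 D2 in
       ee (of_int (m1 * B1 + n1 * (Y1 * D2 - Z1 * B2)) / of_int D1) *
       ee (of_int (m2 * B2 + n2 * (Y2 * D1 - Z2 * B1)) / of_int D2))"

definition kl3_hat :: "int \<Rightarrow> int \<Rightarrow> int \<Rightarrow> int \<Rightarrow> int \<Rightarrow> int \<Rightarrow> complex" where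
  "kl3_hat a u t b D1 D2 =
    (1 / of_int (D1 * D2)) *
    (\<Sum>x\<in>{0..<D1}. \<Sum>y\<in>{0..<D2}.
       kl3 a y x b D1 D2 * ee (of_int (- x * t) / of_int D1) * ee (of_int (- y * u) / of_int D2))"

definition RR :: "int \<Rightarrow> int \<Rightarrow> int \<Rightarrow> real" where
  "RR t D1 D2 = Max {(\<Sum>u\<in>{0..<D2}. cmod (kl3_hat a u (b * t) 1 D1 D2)) | a b.
                       coprime a D1 \<and> coprime b D1}"

definition RR' :: "int \<Rightarrow> int \<Rightarrow> int \<Rightarrow> real" where
  "RR' u D1 D2 = Max {(\<Sum>t\<in>{0..<D1}. cmod (kl3_hat a (b * u) t 1 D1 D2)) | a b.
                       coprime a D1 \<and> coprime b D2}"

end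

theory Submission
  imports Defs
begin

lemma ee_add: "ee (x + y) = ee x * ee y"
  unfolding ee_def by (simp add: distrib_left exp_add)

lemma ee_int: "ee (of_int n) = 1"
proof -
  have "2 * of_real pi * \<i> * of_real (of_int n) = \<i> * (of_int n * (of_real pi * 2))"
    by simp
  then show ?thesis unfolding ee_def by (metis exp_2pi_1_int)
qed

lemma ee_norm: "norm (ee x) = 1"
  unfolding ee_def by (simp add: norm_exp_eq_Re)

lemma ee_mod:
  assumes "D > 0"
  shows "ee (of_int m / of_int D) = ee (of_int (m mod D) / of_int D)"
proof -
  have "m = D * (m div D) + m mod D" by simp
  then have "of_int m / of_int D = of_int (m div D) + (of_int (m mod D) / of_int D :: real)"
    using assms by (smt (verit, ccfv_threshold) add_divide_distrib nonzero_mult_div_cancel_left of_int_add of_int_eq_0_iff of_int_mult)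
  then show ?thesis by (simp add: ee_add ee_int)
qed

lemma ee_cong:
  assumes "D > 0" "[m = m'] (mod D)"
  shows "ee (of_int m / of_int D) = ee (of_int m' / of_int D)"
  using assms ee_mod unfolding cong_def by metis

lemma ee_pow: "ee (of_nat n * x) = ee x ^ n"
proof -
  have "ee (of_nat n * x) = exp (of_nat n * (2 * of_real pi * \<i> * of_real x))"
    unfolding ee_def by (simp add: algebra_simps)
  then show ?thesis unfolding ee_def by (simp add: exp_of_nat_mult)
qed

lemma ee_eq_1: "ee x = 1 \<Longrightarrow> x \<in> \<int>"
proof -
  assume "ee x = 1"
  then obtain n :: int where "Im (2 * of_real pi * \<i> * of_real x) = of_int (2 * n) * pi"
    unfolding ee_def exp_eq_1 by blast
  then have "2 * pi * x = 2 * n * pi" by simp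
  then have "x = n" using pi_gt_zero by (simp add: mult.commute)
  then show ?thesis by simp
qed

lemma orth:
  assumes "D > 0"
  shows "(\<Sum>x\<in>{0..<D}. ee (of_int (x * k) / of_int D)) = (if D dvd k then of_int D else 0)"
proof -
  define w where "w = ee (of_int k / of_int D)"
  have "(\<Sum>x\<in>{0..<D}. ee (of_int (x * k) / of_int D)) = (\<Sum>i<nat D. ee (of_int (int i * k) / of_int D))"
  proof -
    have "{0..<D} = int ` {..<nat D}" using assms
      by (auto simp: image_iff) (metis atLeastLessThan_iff int_nat_eq lessThan_iff nat_less_eq_zless order.refl zless_nat_conj)
    then show ?thesis by (simp add: sum.reindex)
  qed
  also have "\<dots> = (\<Sum>i<nat D. w ^ i)"
  proof (rule sum.cong, simp)
    fix i assume "i \<in> {..<nat D}"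
    have "of_int (int i * k) / of_int D = of_nat i * (of_int k / of_int D :: real)" by simp
    then show "ee (of_int (int i * k) / of_int D) = w ^ i" unfolding w_def by (metis ee_pow)
  qed
  also have "\<dots> = (if D dvd k then of_int D else 0)"
  proof (cases "D dvd k")
    case True
    then obtain j where "k = D * j" by blast
    then have "w = 1" unfolding w_def using assms by (simp add: ee_int)
    then show ?thesis using True assms by simp
  next
    case False
    have "w \<noteq> 1"
    proof
      assume "w = 1"
      then have "of_int k / of_int D \<in> (\<int> :: real set)" unfolding w_def by (rule ee_eq_1)
      then obtain j where j: "of_int k / of_int D = (of_int j :: real)" by (metis Ints_cases)
      then have "of_int k = (of_int (D * j) :: real)" using assms by (simp add: field_simps)
      then have "k = D * j" by linarith
      then show False using False by simp
    qed
    moreover have "w ^ nat D = 1"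
    proof -
      have "w ^ nat D = ee (of_nat (nat D) * (of_int k / of_int D))" unfolding w_def by (simp only: ee_pow)
      also have "\<dots> = ee (of_int k)" using assms by simp
      finally show ?thesis by (simp add: ee_int)
    qed
    ultimately show ?thesis using False by (simp add: sum_gp_strict)
  qed
  finally show ?thesis .
qed

lemma bezout_pair_ok:
  assumes "gcd B (gcd C D) = 1"
  shows "[fst (bezout_pair B C D) * B + snd (bezout_pair B C D) * C = 1] (mod D)"
proof -
  obtain u v where uv: "u * B + v * gcd C D = 1" using bezout_int[of B "gcd C D"] assms by auto
  obtain p q where pq: "p * C + q * D = gcd C D" using bezout_int[of C D] by auto
  have h: "u * B + v * (p * C + q * D) = 1" using uv pq by simp
  have "u * B + (v * p) * C - 1 = D * (- (v * q)) + (u * B + v * (p * C + q * D) - 1)"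
    by (simp add: algebra_simps)
  then have "u * B + (v * p) * C - 1 = D * (- (v * q))" using h by simp
  then have "[u * B + (v * p) * C = 1] (mod D)"
    unfolding cong_iff_dvd_diff by (metis dvd_triv_left)
  then have ex: "\<exists>YZ. (\<lambda>(Y, Z). [Y * B + Z * C = 1] (mod D)) YZ" by auto
  have "(\<lambda>(Y, Z). [Y * B + Z * C = 1] (mod D)) (bezout_pair B C D)"
    unfolding bezout_pair_def by (rule someI_ex[OF ex])
  then show ?thesis by (simp add: split_beta)
qed



lemma uniq_lam:
  fixes B C D Y Z mu P Q :: int
  assumes "D dvd Y * B + Z * C - 1" "D dvd mu * B - P" "D dvd mu * C + Q"
  shows "D dvd mu - (Y * P - Z * Q)"
proof -
  have "mu - (Y * P - Z * Q) = Y * (mu * B - P) + Z * (mu * C + Q) - mu * (Y * B + Z * C - 1)"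
    by (simp add: algebra_simps)
  then show ?thesis using assms by (metis dvd_diff dvd_add dvd_mult)
qed

lemma lam_props:
  fixes B C D B' D' Y Z :: int
  assumes "D dvd Y * B + Z * C - 1" "D dvd B * B' + C * D'"
  shows "D dvd (Y * D' - Z * B') * B - D'" "D dvd (Y * D' - Z * B') * C + B'"
proof -
  have "(Y * D' - Z * B') * B - D' = D' * (Y * B + Z * C - 1) - Z * (B * B' + C * D')"
    by (simp add: algebra_simps)
  then show "D dvd (Y * D' - Z * B') * B - D'" using assms by (metis dvd_diff dvd_mult)
  have "(Y * D' - Z * B') * C + B' = Y * (B * B' + C * D') - B' * (Y * B + Z * C - 1)"
    by (simp add: algebra_simps)
  then show "D dvd (Y * D' - Z * B') * C + B'" using assms by (metis dvd_diff dvd_mult)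
qed

lemma F6:
  fixes B1 C1 B2 C2 D1 D2 L :: int
  assumes D2: "D2 \<noteq> 0"
    and cp: "D1 * D2 dvd D1 * C2 + B1 * B2 + C1 * D2"
    and f3: "D2 dvd L * B2 - D1" and f4: "D2 dvd L * C2 + B1"
  shows "D1 dvd ((D1 - L * B2) div D2) * C2 + ((B1 + L * C2) div D2) * B2 + C1"
    and "D1 dvd L * C1 - ((D1 - L * B2) div D2) * B1"
proof -
  define s where "s = (D1 - L * B2) div D2"
  define b where "b = (B1 + L * C2) div D2"
  have es: "D1 = L * B2 + s * D2"
  proof -
    have "D2 dvd D1 - L * B2" using f3 by (metis dvd_minus_iff minus_diff_eq)
    then have "s * D2 = D1 - L * B2" unfolding s_def by simp
    then show ?thesis by linarith
  qed
  have eb: "B1 = b * D2 - L * C2"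
  proof -
    have "D2 dvd B1 + L * C2" using f4 by (simp add: add.commute)
    then have "b * D2 = B1 + L * C2" unfolding b_def by simp
    then show ?thesis by linarith
  qed
  have "D1 * C2 + B1 * B2 + C1 * D2 = D2 * (s * C2 + b * B2 + C1)"
    by (simp only: es eb) (simp add: algebra_simps)
  then have "D1 * D2 dvd D2 * (s * C2 + b * B2 + C1)" using cp by simp
  then have h: "D1 dvd s * C2 + b * B2 + C1" using D2
    by (metis mult.commute dvd_mult_cancel_right)
  then show "D1 dvd ((D1 - L * B2) div D2) * C2 + ((B1 + L * C2) div D2) * B2 + C1"
    unfolding s_def b_def .
  have "L * C1 - s * B1 = L * (s * C2 + b * B2 + C1) - b * D1"
    by (simp only: es eb) (simp add: algebra_simps)
  then show "D1 dvd L * C1 - ((D1 - L * B2) div D2) * B1" using h unfolding s_def[symmetric]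
    by (metis dvd_diff dvd_mult dvd_triv_right)
qed

lemma d2_lemma:
  fixes B1 C1 B2 C2 D1 D2 L :: int
  assumes D2: "D2 \<noteq> 0"
    and g1: "gcd B1 (gcd C1 D1) = 1"
    and cp: "D1 * D2 dvd D1 * C2 + B1 * B2 + C1 * D2"
    and f3: "D2 dvd L * B2 - D1" and f4: "D2 dvd L * C2 + B1"
  shows "gcd B2 (gcd C2 D2) = 1"
proof -
  define d where "d = gcd B2 (gcd C2 D2)"
  have dB2: "d dvd B2" and dC2: "d dvd C2" and dD2: "d dvd D2" unfolding d_def
    by (meson dvd_trans gcd_dvd1 gcd_dvd2)+
  have dD1: "d dvd D1"
  proof -
    have "d dvd L * B2 - D1" using dD2 f3 by (rule dvd_trans)
    moreover have "d dvd L * B2" using dB2 by simp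
    ultimately have "d dvd L * B2 - (L * B2 - D1)" by (rule dvd_diff[rotated])
    then show ?thesis by simp
  qed
  have dB1: "d dvd B1"
  proof -
    have "d dvd L * C2 + B1" using dD2 f4 by (rule dvd_trans)
    moreover have "d dvd L * C2" using dC2 by simp
    ultimately show ?thesis by (simp add: dvd_add_right_iff)
  qed
  have "d dvd C1"
  proof -
    have "d dvd ((D1 - L * B2) div D2) * C2 + ((B1 + L * C2) div D2) * B2 + C1"
      using dD1 F6(1)[OF D2 cp f3 f4] by (rule dvd_trans)
    moreover have "d dvd ((D1 - L * B2) div D2) * C2 + ((B1 + L * C2) div D2) * B2"
      using dC2 dB2 by simp
    ultimately show ?thesis by (simp add: dvd_add_right_iff)
  qed
  then have "d dvd gcd B1 (gcd C1 D1)" using dB1 dD1 by simp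
  then have "d dvd 1" using g1 by simp
  moreover have "d \<ge> 0" unfolding d_def by simp
  ultimately show ?thesis unfolding d_def by simp
qed

lemma lam2_constr:
  fixes B1 C1 B2 C2 D1 D2 L :: int
  assumes D1: "D1 \<noteq> 0" and D2: "D2 \<noteq> 0"
    and cp: "D1 * D2 dvd D1 * C2 + B1 * B2 + C1 * D2"
    and f3: "D2 dvd L * B2 - D1"
    and f7: "D1 dvd L * C1 - ((D1 - L * B2) div D2) * B1"
  shows "D2 dvd L * C2 + B1"
proof -
  define s where "s = (D1 - L * B2) div D2"
  have es: "D1 = L * B2 + s * D2"
  proof -
    have "D2 dvd D1 - L * B2" using f3 by (metis dvd_minus_iff minus_diff_eq)
    then have "s * D2 = D1 - L * B2" unfolding s_def by simp
    then show ?thesis by linarith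
  qed
  have "D1 * (L * C2 + B1) = L * (D1 * C2 + B1 * B2 + C1 * D2) - D2 * (L * C1 - s * B1)"
    by (simp only: es) (simp add: algebra_simps)
  moreover have "D1 * D2 dvd L * (D1 * C2 + B1 * B2 + C1 * D2)" using cp by simp
  moreover have "D1 * D2 dvd D2 * (L * C1 - s * B1)" using f7 unfolding s_def[symmetric]
    by (simp add: mult.commute)
  ultimately have "D1 * D2 dvd D1 * (L * C2 + B1)" by (metis dvd_diff)
  then show ?thesis using D1 by simp
qed



lemma dvd_mod_mult_iff:
  fixes a B Q D :: int
  shows "D dvd (a mod D) * B + Q \<longleftrightarrow> D dvd a * B + Q"
proof -
  have "a * B + Q = (a mod D) * B + Q + D * ((a div D) * B)"
    by (metis add.commute add.left_commute distrib_right div_mult_mod_eq mult.assoc mult.commute)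
  then show ?thesis by (metis dvd_add_left_iff dvd_triv_left)
qed

lemma dual_core:
  fixes B1 C1 B2 C2 D1 D2 l1 l2 Y Z :: int
  assumes D1: "D1 > 0" and D2: "D2 > 0"
    and g1: "gcd B1 (gcd C1 D1) = 1"
    and cp: "D1 * D2 dvd D1 * C2 + B1 * B2 + C1 * D2"
    and f1: "D1 dvd l1 * B1 - D2" and f2: "D1 dvd l1 * C1 + B2"
    and f3: "D2 dvd l2 * B2 - D1" and f4: "D2 dvd l2 * C2 + B1"
    and yz: "D1 dvd Y * B1 + Z * C1 - 1"
  defines "s \<equiv> (D1 - l2 * B2) div D2"
  defines "C1' \<equiv> (- (Y * l2 + Z * s)) mod D1"
  defines "C2' \<equiv> (- ((l1 * l2 + C1' * D2) div D1)) mod D2"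
  shows "D1 dvd C1 * C1' + s" "D1 dvd B1 * C1' + l2" "D1 dvd B2 * C1' - s * l1"
    "D1 * D2 dvd D1 * C2' + l1 * l2 + C1' * D2"
    "D2 dvd B2 * C2' + l1"
    "gcd l1 (gcd C1' D1) = 1"
    "gcd l2 (gcd C2' D2) = 1"
proof -
  have f6: "D1 dvd s * C2 + ((B1 + l2 * C2) div D2) * B2 + C1"
    using F6(1)[OF _ cp f3 f4] D2 unfolding s_def by simp
  have f7: "D1 dvd l2 * C1 - s * B1"
    using F6(2)[OF _ cp f3 f4] D2 unfolding s_def by simp
  define C0 where "C0 = - (Y * l2 + Z * s)"
  have C1'C0: "C1' = C0 mod D1" unfolding C1'_def C0_def ..
  have a0: "D1 dvd C0 * C1 + s"
  proof -
    have "C0 * C1 + s = - (Y * (l2 * C1 - s * B1)) - s * (Y * B1 + Z * C1 - 1)"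
      unfolding C0_def by (simp add: algebra_simps)
    then show ?thesis using f7 yz by (metis dvd_diff dvd_minus_iff dvd_mult)
  qed
  then show a: "D1 dvd C1 * C1' + s" unfolding C1'C0
    by (metis dvd_mod_mult_iff mult.commute)
  have b0: "D1 dvd C0 * B1 + l2"
  proof -
    have "C0 * B1 + l2 = Z * (l2 * C1 - s * B1) - l2 * (Y * B1 + Z * C1 - 1)"
      unfolding C0_def by (simp add: algebra_simps)
    then show ?thesis using f7 yz by (metis dvd_diff dvd_mult)
  qed
  then show b: "D1 dvd B1 * C1' + l2" unfolding C1'C0
    by (metis dvd_mod_mult_iff mult.commute)
  have c0: "D1 dvd C0 * B2 + (- (s * l1))"
  proof -
    have "C0 * B2 + (- (s * l1)) = C0 * (l1 * C1 + B2) - l1 * (C0 * C1 + s)"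
      by (simp add: algebra_simps)
    then show ?thesis using f2 a0 by (metis dvd_diff dvd_mult)
  qed
  then show c: "D1 dvd B2 * C1' - s * l1" unfolding C1'C0
    using dvd_mod_mult_iff[of D1 C0 B2 "- (s * l1)"] by (simp add: mult.commute)
  have d: "D1 dvd l1 * l2 + C1' * D2"
  proof -
    have "l1 * l2 + C1' * D2 = l1 * (B1 * C1' + l2) - C1' * (l1 * B1 - D2)"
      by (simp add: algebra_simps)
    then show ?thesis using b f1 by (metis dvd_diff dvd_mult)
  qed
  define w where "w = (l1 * l2 + C1' * D2) div D1"
  have wD: "l1 * l2 + C1' * D2 = D1 * w" unfolding w_def using d by simp
  have C2'w: "C2' = (- w) mod D2" unfolding C2'_def w_def ..
  have "D2 dvd C2' + w"
  proof -
    have "(- w) mod D2 + w = - ((- w) - (- w) mod D2)" by simp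
    moreover have "D2 dvd (- w) - (- w) mod D2" by (rule dvd_minus_mod)
    ultimately show ?thesis unfolding C2'w by (metis dvd_minus_iff)
  qed
  then have "D1 * D2 dvd D1 * (C2' + w)" by simp
  moreover have "D1 * C2' + l1 * l2 + C1' * D2 = D1 * (C2' + w)" using wD by (simp add: algebra_simps)
  ultimately show cp': "D1 * D2 dvd D1 * C2' + l1 * l2 + C1' * D2" by simp
  have es: "D1 = l2 * B2 + s * D2"
  proof -
    have "D2 dvd D1 - l2 * B2" using f3 by (metis dvd_minus_iff minus_diff_eq)
    then have "s * D2 = D1 - l2 * B2" unfolding s_def by simp
    then show ?thesis by linarith
  qed
  show e: "D2 dvd B2 * C2' + l1"
  proof -
    have "D1 * (B2 * C2' + l1) = B2 * (D1 * C2' + l1 * l2 + C1' * D2) - D2 * (B2 * C1' - s * l1)"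
      by (simp only: es) (simp add: algebra_simps)
    moreover have "D1 * D2 dvd B2 * (D1 * C2' + l1 * l2 + C1' * D2)" using cp' by simp
    moreover have "D1 * D2 dvd D2 * (B2 * C1' - s * l1)" using c by (simp add: mult.commute)
    ultimately have "D1 * D2 dvd D1 * (B2 * C2' + l1)" by (metis dvd_diff)
    then show ?thesis using D1 by simp
  qed
  show g1': "gcd l1 (gcd C1' D1) = 1"
  proof -
    define d where "d = gcd l1 (gcd C1' D1)"
    have dl1: "d dvd l1" and dC: "d dvd C1'" and dD1: "d dvd D1" unfolding d_def
      by (meson dvd_trans gcd_dvd1 gcd_dvd2)+
    have "d dvd C1 * C1' + s" using dD1 a by (rule dvd_trans)
    then have ds: "d dvd s" using dC by (simp add: dvd_add_right_iff)
    have "d dvd B1 * C1' + l2" using dD1 b by (rule dvd_trans)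
    then have dl2: "d dvd l2" using dC by (simp add: dvd_add_right_iff)
    have "d dvd l1 * C1 + B2" using dD1 f2 by (rule dvd_trans)
    then have dB2: "d dvd B2" using dl1 by (simp add: dvd_add_right_iff)
    have "d dvd l1 * B1 - D2" using dD1 f1 by (rule dvd_trans)
    moreover have "d dvd l1 * B1" using dl1 by simp
    ultimately have "d dvd l1 * B1 - (l1 * B1 - D2)" by (rule dvd_diff[rotated])
    then have dD2: "d dvd D2" by simp
    have "d dvd l2 * C2 + B1" using dD2 f4 by (rule dvd_trans)
    then have dB1: "d dvd B1" using dl2 by (simp add: dvd_add_right_iff)
    have "d dvd s * C2 + ((B1 + l2 * C2) div D2) * B2 + C1" using dD1 f6 by (rule dvd_trans)
    moreover have "d dvd s * C2 + ((B1 + l2 * C2) div D2) * B2" using ds dB2 by simp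
    ultimately have "d dvd C1" by (simp add: dvd_add_right_iff)
    then have "d dvd gcd B1 (gcd C1 D1)" using dB1 dD1 by simp
    then have "d dvd 1" using g1 by simp
    moreover have "d \<ge> 0" unfolding d_def by simp
    ultimately show ?thesis unfolding d_def by simp
  qed
  have f3': "D2 dvd B2 * l2 - D1" using f3 by (simp add: mult.commute)
  show "gcd l2 (gcd C2' D2) = 1"
    using d2_lemma[of D2 l1 C1' D1 C2' l2 B2] D2 g1' cp' f3' e by simp
qed



definition l1f :: "int \<Rightarrow> int \<Rightarrow> int \<times> int \<times> int \<times> int \<Rightarrow> int" where
  "l1f D1 D2 x = (case x of (B1, C1, B2, C2) \<Rightarrow>
     fst (bezout_pair B1 C1 D1) * D2 - snd (bezout_pair B1 C1 D1) * B2)"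

definition l2f :: "int \<Rightarrow> int \<Rightarrow> int \<times> int \<times> int \<times> int \<Rightarrow> int" where
  "l2f D1 D2 x = (case x of (B1, C1, B2, C2) \<Rightarrow>
     fst (bezout_pair B2 C2 D2) * D1 - snd (bezout_pair B2 C2 D2) * B1)"

definition key :: "int \<Rightarrow> int \<Rightarrow> int \<times> int \<times> int \<times> int \<Rightarrow> int \<times> int \<times> int \<times> int" where
  "key D1 D2 x = (case x of (B1, C1, B2, C2) \<Rightarrow> (B1, B2, l1f D1 D2 x mod D1, l2f D1 D2 x mod D2))"

definition hsum :: "int \<Rightarrow> int \<Rightarrow> (int \<times> int \<times> int \<times> int \<Rightarrow> complex) \<Rightarrow> complex" where
  "hsum D1 D2 h = (\<Sum>x\<in>kl_index D1 D2. h (key D1 D2 x))"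

definition KK :: "int \<Rightarrow> int \<Rightarrow> (int \<times> int \<times> int \<times> int) set" where
  "KK D1 D2 = {0..<D1} \<times> {0..<D2} \<times> {0..<D1} \<times> {0..<D2}"

lemma X_mem: "(B1, C1, B2, C2) \<in> kl_index D1 D2 \<longleftrightarrow>
   0 \<le> B1 \<and> B1 < D1 \<and> 0 \<le> C1 \<and> C1 < D1 \<and> 0 \<le> B2 \<and> B2 < D2 \<and> 0 \<le> C2 \<and> C2 < D2 \<and>
   gcd B1 (gcd C1 D1) = 1 \<and> gcd B2 (gcd C2 D2) = 1 \<and> D1 * D2 dvd D1 * C2 + B1 * B2 + C1 * D2"
  unfolding kl_index_def by (auto simp: cong_0_iff)

lemma X_finite: "finite (kl_index D1 D2)"
proof -
  have "kl_index D1 D2 \<subseteq> {0..<D1} \<times> {0..<D1} \<times> {0..<D2} \<times> {0..<D2}"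
    unfolding kl_index_def by auto
  then show ?thesis by (rule finite_subset) auto
qed

lemma dvd_mod_mult_iff':
  fixes a B Q D :: int
  shows "D dvd (a mod D) * B - Q \<longleftrightarrow> D dvd a * B - Q"
  using dvd_mod_mult_iff[of D a B "- Q"] by simp

lemma bez_dvd:
  assumes "gcd B (gcd C D) = 1"
  shows "D dvd fst (bezout_pair B C D) * B + snd (bezout_pair B C D) * C - 1"
  using bezout_pair_ok[OF assms] unfolding cong_iff_dvd_diff .

lemma X_facts:
  assumes x: "(B1, C1, B2, C2) \<in> kl_index D1 D2"
  defines "l1 \<equiv> l1f D1 D2 (B1, C1, B2, C2) mod D1"
  defines "l2 \<equiv> l2f D1 D2 (B1, C1, B2, C2) mod D2"
  shows "D1 dvd l1 * B1 - D2" "D1 dvd l1 * C1 + B2" "D2 dvd l2 * B2 - D1" "D2 dvd l2 * C2 + B1"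
proof -
  have g1: "gcd B1 (gcd C1 D1) = 1" and g2: "gcd B2 (gcd C2 D2) = 1"
    and cp: "D1 * D2 dvd D1 * C2 + B1 * B2 + C1 * D2" using x unfolding X_mem by auto
  have "D1 dvd D1 * C2 + B1 * B2 + C1 * D2" using cp by (rule dvd_mult_left)
  then have c1: "D1 dvd B1 * B2 + C1 * D2" by (metis add.assoc dvd_add_right_iff dvd_triv_left)
  have "D2 dvd D1 * C2 + B1 * B2 + C1 * D2" using cp by (rule dvd_mult_right)
  then have c2: "D2 dvd B2 * B1 + C2 * D1"
    by (metis add.commute dvd_add_right_iff dvd_triv_right mult.commute)
  note L1 = lam_props[OF bez_dvd[OF g1] c1]
  note L2 = lam_props[OF bez_dvd[OF g2] c2]
  show "D1 dvd l1 * B1 - D2" unfolding l1_def l1f_def using L1(1) by (simp add: dvd_mod_mult_iff')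
  show "D1 dvd l1 * C1 + B2" unfolding l1_def l1f_def using L1(2) by (simp add: dvd_mod_mult_iff)
  show "D2 dvd l2 * B2 - D1" unfolding l2_def l2f_def using L2(1) by (simp add: dvd_mod_mult_iff')
  show "D2 dvd l2 * C2 + B1" unfolding l2_def l2f_def using L2(2) by (simp add: dvd_mod_mult_iff)
qed

lemma key_l1:
  assumes g1: "gcd B1 (gcd C1 D1) = 1" and mu: "0 \<le> mu" "mu < D1"
    and "D1 dvd mu * B1 - D2" "D1 dvd mu * C1 + B2"
  shows "l1f D1 D2 (B1, C1, B2, C2) mod D1 = mu"
proof -
  have "D1 dvd mu - l1f D1 D2 (B1, C1, B2, C2)"
    unfolding l1f_def using uniq_lam[OF bez_dvd[OF g1] assms(4,5)] by simp
  then have "mu mod D1 = l1f D1 D2 (B1, C1, B2, C2) mod D1" by (simp add: mod_eq_dvd_iff)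
  then show ?thesis using mu by simp
qed

lemma key_l2:
  assumes g2: "gcd B2 (gcd C2 D2) = 1" and mu: "0 \<le> mu" "mu < D2"
    and "D2 dvd mu * B2 - D1" "D2 dvd mu * C2 + B1"
  shows "l2f D1 D2 (B1, C1, B2, C2) mod D2 = mu"
proof -
  have "D2 dvd mu - l2f D1 D2 (B1, C1, B2, C2)"
    unfolding l2f_def using uniq_lam[OF bez_dvd[OF g2] assms(4,5)] by simp
  then have "mu mod D2 = l2f D1 D2 (B1, C1, B2, C2) mod D2" by (simp add: mod_eq_dvd_iff)
  then show ?thesis using mu by simp
qed

lemma key_in_KK:
  assumes "D1 > 0" "D2 > 0" "x \<in> kl_index D1 D2"
  shows "key D1 D2 x \<in> KK D1 D2"
  using assms unfolding KK_def key_def kl_index_def by (auto split: prod.splits)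

lemma gp:
  fixes key :: "'a \<Rightarrow> 'k" and phi :: "'k \<Rightarrow> 'k" and h :: "'k \<Rightarrow> complex"
  assumes fX: "finite X" and fK: "finite K" and kX: "key ` X \<subseteq> K" and bij: "bij_betw phi K K"
    and le: "\<And>k. k \<in> K \<Longrightarrow> card {x\<in>X. key x = k} \<le> card {x\<in>X. key x = phi k}"
  shows "(\<Sum>x\<in>X. h (key x)) = (\<Sum>x\<in>X. h (phi (key x)))"
proof -
  define N where "N k = card {x\<in>X. key x = k}" for k
  have S1: "(\<Sum>x\<in>X. g (key x)) = (\<Sum>k\<in>K. of_nat (N k) * g k)" for g :: "'k \<Rightarrow> complex"
  proof -
    have "(\<Sum>x\<in>X. g (key x)) = (\<Sum>k\<in>K. \<Sum>x\<in>{x. x \<in> X \<and> key x = k}. g (key x))"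
      using sum.group[OF fX fK kX, of "\<lambda>x. g (key x)"] by simp
    also have "\<dots> = (\<Sum>k\<in>K. of_nat (N k) * g k)"
    proof (rule sum.cong, simp)
      fix k assume "k \<in> K"
      have "(\<Sum>x\<in>{x. x \<in> X \<and> key x = k}. g (key x)) = (\<Sum>x\<in>{x. x \<in> X \<and> key x = k}. g k)"
        by (rule sum.cong) auto
      then show "(\<Sum>x\<in>{x. x \<in> X \<and> key x = k}. g (key x)) = of_nat (N k) * g k"
        unfolding N_def by simp
    qed
    finally show ?thesis .
  qed
  have sumN: "(\<Sum>k\<in>K. N (phi k)) = (\<Sum>k\<in>K. N k)"
    using sum.reindex_bij_betw[OF bij, of N] .
  have le': "\<And>k. k \<in> K \<Longrightarrow> N k \<le> N (phi k)" using le unfolding N_def by simp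
  have "(\<Sum>k\<in>K. N (phi k) - N k) = (\<Sum>k\<in>K. N (phi k)) - (\<Sum>k\<in>K. N k)"
    using le' by (rule sum_subtractf_nat)
  then have "(\<Sum>k\<in>K. N (phi k) - N k) = 0" using sumN by simp
  then have "\<forall>k\<in>K. N (phi k) - N k = 0" using fK by simp
  then have Neq: "\<And>k. k \<in> K \<Longrightarrow> N (phi k) = N k" using le' by (meson antisym diff_is_0_eq)
  have "(\<Sum>x\<in>X. h (phi (key x))) = (\<Sum>k\<in>K. of_nat (N k) * h (phi k))" by (rule S1)
  also have "\<dots> = (\<Sum>k\<in>K. of_nat (N (phi k)) * h (phi k))"
    by (rule sum.cong) (auto simp: Neq)
  also have "\<dots> = (\<Sum>k\<in>K. of_nat (N k) * h k)"
    using sum.reindex_bij_betw[OF bij, of "\<lambda>k. of_nat (N k) * h k"] by simp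
  also have "\<dots> = (\<Sum>x\<in>X. h (key x))" by (rule S1[symmetric])
  finally show ?thesis ..
qed

lemma hsum_phi:
  assumes D: "D1 > 0" "D2 > 0" and bij: "bij_betw phi (KK D1 D2) (KK D1 D2)"
    and le: "\<And>k. k \<in> KK D1 D2 \<Longrightarrow> card {x\<in>kl_index D1 D2. key D1 D2 x = k}
                  \<le> card {x\<in>kl_index D1 D2. key D1 D2 x = phi k}"
  shows "hsum D1 D2 h = hsum D1 D2 (\<lambda>k. h (phi k))"
  unfolding hsum_def
proof (rule gp[OF X_finite _ _ bij le])
  show "finite (KK D1 D2)" unfolding KK_def by auto
  show "key D1 D2 ` kl_index D1 D2 \<subseteq> KK D1 D2" using key_in_KK[OF D] by auto
qed



definition dmap :: "int \<Rightarrow> int \<Rightarrow> int \<times> int \<times> int \<times> int \<Rightarrow> int \<times> int \<times> int \<times> int" where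
  "dmap D1 D2 x = (case x of (B1, C1, B2, C2) \<Rightarrow>
     (let l1 = l1f D1 D2 x mod D1; l2 = l2f D1 D2 x mod D2; s = (D1 - l2 * B2) div D2;
          C1' = (- (fst (bezout_pair B1 C1 D1) * l2 + snd (bezout_pair B1 C1 D1) * s)) mod D1;
          C2' = (- ((l1 * l2 + C1' * D2) div D1)) mod D2
      in (l1, C1', l2, C2')))"

definition dphi :: "int \<times> int \<times> int \<times> int \<Rightarrow> int \<times> int \<times> int \<times> int" where
  "dphi k = (case k of (B1, B2, L1, L2) \<Rightarrow> (L1, L2, B1, B2))"

lemma dmap_props:
  assumes D: "D1 > 0" "D2 > 0" and x: "(B1, C1, B2, C2) \<in> kl_index D1 D2"
  defines "l1 \<equiv> l1f D1 D2 (B1, C1, B2, C2) mod D1"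
  defines "l2 \<equiv> l2f D1 D2 (B1, C1, B2, C2) mod D2"
  defines "s \<equiv> (D1 - l2 * B2) div D2"
  shows "dmap D1 D2 (B1, C1, B2, C2) \<in> kl_index D1 D2"
    "key D1 D2 (dmap D1 D2 (B1, C1, B2, C2)) = dphi (key D1 D2 (B1, C1, B2, C2))"
    "fst (snd (dmap D1 D2 (B1, C1, B2, C2))) = Cq \<Longrightarrow>
       D1 dvd C1 * Cq + s \<and> gcd l1 (gcd Cq D1) = 1"
proof -
  have r: "0 \<le> B1" "B1 < D1" "0 \<le> C1" "C1 < D1" "0 \<le> B2" "B2 < D2" "0 \<le> C2" "C2 < D2"
    and g1: "gcd B1 (gcd C1 D1) = 1" and g2: "gcd B2 (gcd C2 D2) = 1"
    and cp: "D1 * D2 dvd D1 * C2 + B1 * B2 + C1 * D2" using x unfolding X_mem by auto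
  note F = X_facts[OF x, folded l1_def l2_def]
  define Y where "Y = fst (bezout_pair B1 C1 D1)"
  define Z where "Z = snd (bezout_pair B1 C1 D1)"
  define C1' where "C1' = (- (Y * l2 + Z * s)) mod D1"
  define C2' where "C2' = (- ((l1 * l2 + C1' * D2) div D1)) mod D2"
  have dm: "dmap D1 D2 (B1, C1, B2, C2) = (l1, C1', l2, C2')"
    unfolding dmap_def Let_def l1_def l2_def s_def Y_def Z_def C1'_def C2'_def by simp
  note DC = dual_core[OF D g1 cp F bez_dvd[OF g1], folded Y_def Z_def, folded s_def,
      folded C1'_def, folded C2'_def]
  have l1r: "0 \<le> l1" "l1 < D1" unfolding l1_def using D by auto
  have l2r: "0 \<le> l2" "l2 < D2" unfolding l2_def using D by auto
  have c1r: "0 \<le> C1'" "C1' < D1" unfolding C1'_def using D by auto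
  have c2r: "0 \<le> C2'" "C2' < D2" unfolding C2'_def using D by auto
  show "dmap D1 D2 (B1, C1, B2, C2) \<in> kl_index D1 D2"
    unfolding dm X_mem using l1r l2r c1r c2r DC(4,6,7) by simp
  have k1: "l1f D1 D2 (l1, C1', l2, C2') mod D1 = B1"
  proof (rule key_l1[OF DC(6) r(1,2)])
    show "D1 dvd B1 * l1 - D2" using F(1) by (simp add: mult.commute)
    show "D1 dvd B1 * C1' + l2" by (rule DC(2))
  qed
  have k2: "l2f D1 D2 (l1, C1', l2, C2') mod D2 = B2"
  proof (rule key_l2[OF DC(7) r(5,6)])
    show "D2 dvd B2 * l2 - D1" using F(3) by (simp add: mult.commute)
    show "D2 dvd B2 * C2' + l1" by (rule DC(5))
  qed
  show "key D1 D2 (dmap D1 D2 (B1, C1, B2, C2)) = dphi (key D1 D2 (B1, C1, B2, C2))"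
    unfolding dm key_def dphi_def using k1 k2 by (simp add: l1_def l2_def)
  show "fst (snd (dmap D1 D2 (B1, C1, B2, C2))) = Cq \<Longrightarrow>
       D1 dvd C1 * Cq + s \<and> gcd l1 (gcd Cq D1) = 1"
    unfolding dm using DC(1,6) by simp
qed

lemma fiber_eq:
  assumes D: "D1 > 0" "D2 > 0"
    and x: "(B1, C1, B2, C2) \<in> kl_index D1 D2" and y: "(B1, C1y, B2, C2y) \<in> kl_index D1 D2"
    and "C1 = C1y"
  shows "C2 = C2y"
proof -
  have cpx: "D1 * D2 dvd D1 * C2 + B1 * B2 + C1 * D2" and cpy: "D1 * D2 dvd D1 * C2y + B1 * B2 + C1 * D2"
    and r: "0 \<le> C2" "C2 < D2" "0 \<le> C2y" "C2y < D2" using x y assms(5) unfolding X_mem by auto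
  have "D1 * D2 dvd (D1 * C2 + B1 * B2 + C1 * D2) - (D1 * C2y + B1 * B2 + C1 * D2)"
    using cpx cpy by (rule dvd_diff)
  then have "D1 * D2 dvd D1 * (C2 - C2y)" by (simp add: algebra_simps)
  then have "D2 dvd C2 - C2y" using D by simp
  then have "C2 mod D2 = C2y mod D2" by (simp add: mod_eq_dvd_iff)
  then show ?thesis using r by simp
qed

lemma dual_le:
  assumes D: "D1 > 0" "D2 > 0" and k: "k \<in> KK D1 D2"
  shows "card {x\<in>kl_index D1 D2. key D1 D2 x = k} \<le> card {x\<in>kl_index D1 D2. key D1 D2 x = dphi k}"
proof (rule card_inj_on_le[where f = "dmap D1 D2"])
  show "finite {x\<in>kl_index D1 D2. key D1 D2 x = dphi k}" using X_finite by simp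
  show "dmap D1 D2 ` {x\<in>kl_index D1 D2. key D1 D2 x = k} \<subseteq> {x\<in>kl_index D1 D2. key D1 D2 x = dphi k}"
  proof (rule image_subsetI)
    fix x assume xm: "x \<in> {x\<in>kl_index D1 D2. key D1 D2 x = k}"
    obtain B1 C1 B2 C2 where xe: "x = (B1, C1, B2, C2)" by (cases x) auto
    have x: "(B1, C1, B2, C2) \<in> kl_index D1 D2" and kx: "key D1 D2 (B1, C1, B2, C2) = k"
      using xm xe by auto
    show "dmap D1 D2 x \<in> {x\<in>kl_index D1 D2. key D1 D2 x = dphi k}"
      using dmap_props(1,2)[OF D x] kx xe by simp
  qed
  show "inj_on (dmap D1 D2) {x\<in>kl_index D1 D2. key D1 D2 x = k}"
  proof (rule inj_onI)
    fix xx yy assume xm: "xx \<in> {x\<in>kl_index D1 D2. key D1 D2 x = k}"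
      and ym: "yy \<in> {x\<in>kl_index D1 D2. key D1 D2 x = k}" and eq0: "dmap D1 D2 xx = dmap D1 D2 yy"
    obtain B1 C1 B2 C2 where xe: "xx = (B1, C1, B2, C2)" by (cases xx) auto
    obtain B1y C1y B2y C2y where ye: "yy = (B1y, C1y, B2y, C2y)" by (cases yy) auto
    have x: "(B1, C1, B2, C2) \<in> kl_index D1 D2" and y: "(B1y, C1y, B2y, C2y) \<in> kl_index D1 D2"
      and kk: "key D1 D2 (B1y, C1y, B2y, C2y) = key D1 D2 (B1, C1, B2, C2)"
      and eq: "dmap D1 D2 (B1, C1, B2, C2) = dmap D1 D2 (B1y, C1y, B2y, C2y)"
      using xm ym xe ye eq0 by auto
    have bb: "B1y = B1" "B2y = B2" using kk unfolding key_def by auto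
    have ll: "l1f D1 D2 (B1y, C1y, B2y, C2y) mod D1 = l1f D1 D2 (B1, C1, B2, C2) mod D1"
      "l2f D1 D2 (B1y, C1y, B2y, C2y) mod D2 = l2f D1 D2 (B1, C1, B2, C2) mod D2"
      using kk unfolding key_def by auto
    define C' where "C' = fst (snd (dmap D1 D2 (B1, C1, B2, C2)))"
    define l1 where "l1 = l1f D1 D2 (B1, C1, B2, C2) mod D1"
    define l2 where "l2 = l2f D1 D2 (B1, C1, B2, C2) mod D2"
    have y': "(B1, C1y, B2, C2y) \<in> kl_index D1 D2" using y bb by simp
    have hx: "D1 dvd C1 * C' + (D1 - l2 * B2) div D2" "gcd l1 (gcd C' D1) = 1"
      using dmap_props(3)[OF D x, of C'] unfolding C'_def l1_def l2_def by auto
    have hy: "D1 dvd C1y * C' + (D1 - l2 * B2) div D2"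
      using dmap_props(3)[OF D y', of C'] eq bb ll unfolding C'_def l1_def l2_def by auto
    have fx: "D1 dvd l1 * C1 + B2" using X_facts(2)[OF x] unfolding l1_def .
    have fy: "D1 dvd l1 * C1y + B2" using X_facts(2)[OF y'] ll(1) bb unfolding l1_def by simp
    obtain p q r where pqr: "p * l1 + q * C' + r * D1 = 1"
    proof -
      obtain u v where uv: "u * l1 + v * gcd C' D1 = gcd l1 (gcd C' D1)" using bezout_int by blast
      obtain p' q' where pq: "p' * C' + q' * D1 = gcd C' D1" using bezout_int by blast
      have h: "u * l1 + v * (p' * C' + q' * D1) = 1" using uv pq hx(2) by simp
      have "u * l1 + (v * p') * C' + (v * q') * D1 = u * l1 + v * (p' * C' + q' * D1)"
        by (simp add: algebra_simps)
      then have "u * l1 + (v * p') * C' + (v * q') * D1 = 1" using h by simp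
      then show ?thesis using that by blast
    qed
    have "p * ((l1 * C1 + B2) - (l1 * C1y + B2))
        + q * ((C1 * C' + (D1 - l2 * B2) div D2) - (C1y * C' + (D1 - l2 * B2) div D2))
        + D1 * (r * (C1 - C1y)) = (C1 - C1y) * (p * l1 + q * C' + r * D1)"
      by (simp add: algebra_simps)
    then have "C1 - C1y = p * ((l1 * C1 + B2) - (l1 * C1y + B2))
        + q * ((C1 * C' + (D1 - l2 * B2) div D2) - (C1y * C' + (D1 - l2 * B2) div D2))
        + D1 * (r * (C1 - C1y))" using pqr by simp
    moreover have "D1 dvd p * ((l1 * C1 + B2) - (l1 * C1y + B2))" using fx fy by (metis dvd_diff dvd_mult)
    moreover have "D1 dvd q * ((C1 * C' + (D1 - l2 * B2) div D2) - (C1y * C' + (D1 - l2 * B2) div D2))"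
      using hx(1) hy by (metis dvd_diff dvd_mult)
    ultimately have "D1 dvd C1 - C1y" by (metis dvd_add dvd_triv_left)
    then have "C1 mod D1 = C1y mod D1" by (simp add: mod_eq_dvd_iff)
    moreover have "0 \<le> C1" "C1 < D1" "0 \<le> C1y" "C1y < D1" using x y unfolding X_mem by auto
    ultimately have c1: "C1 = C1y" by simp
    have "C2 = C2y" by (rule fiber_eq[OF D x y' c1])
    then show "xx = yy" using bb c1 xe ye by simp
  qed
qed

lemma dphi_bij: "bij_betw dphi (KK D1 D2) (KK D1 D2)"
  by (rule bij_betw_byWitness[where f' = dphi]) (auto simp: dphi_def KK_def)

lemma hsum_dual:
  assumes "D1 > 0" "D2 > 0"
  shows "hsum D1 D2 h = hsum D1 D2 (\<lambda>(B1, B2, L1, L2). h (L1, L2, B1, B2))"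
proof -
  have "hsum D1 D2 h = hsum D1 D2 (\<lambda>k. h (dphi k))"
    by (rule hsum_phi[OF assms dphi_bij dual_le[OF assms]])
  also have "(\<lambda>k. h (dphi k)) = (\<lambda>(B1, B2, L1, L2). h (L1, L2, B1, B2))"
    by (auto simp: dphi_def)
  finally show ?thesis .
qed



lemma constr_C2:
  fixes W D1 D2 :: int
  assumes "D1 dvd W" "D2 > 0"
  shows "D1 * D2 dvd D1 * ((- (W div D1)) mod D2) + W"
    "0 \<le> (- (W div D1)) mod D2" "(- (W div D1)) mod D2 < D2"
proof -
  define w where "w = W div D1"
  have wD: "W = D1 * w" unfolding w_def using assms(1) by simp
  have "D2 dvd (- w) mod D2 + w"
  proof -
    have "(- w) mod D2 + w = - ((- w) - (- w) mod D2)" by simp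
    moreover have "D2 dvd (- w) - (- w) mod D2" by (rule dvd_minus_mod)
    ultimately show ?thesis by (metis dvd_minus_iff)
  qed
  then have "D1 * D2 dvd D1 * ((- w) mod D2 + w)" by simp
  then show "D1 * D2 dvd D1 * ((- (W div D1)) mod D2) + W" unfolding w_def[symmetric] wD
    by (simp add: algebra_simps)
  show "0 \<le> (- (W div D1)) mod D2" "(- (W div D1)) mod D2 < D2" using assms(2) by auto
qed

lemma mod_eq_sub: "(x::int) mod D = x - x div D * D"
  using div_mult_mod_eq[of x D] by linarith

definition tmap :: "int \<Rightarrow> int \<Rightarrow> int \<Rightarrow> int \<times> int \<times> int \<times> int \<Rightarrow> int \<times> int \<times> int \<times> int" where
  "tmap D1 D2 a x = (case x of (B1, C1, B2, C2) \<Rightarrow>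
     (let B1' = (a * B1) mod D1; C1' = (a * C1) mod D1;
          C2' = (- ((B1' * B2 + C1' * D2) div D1)) mod D2 in (B1', C1', B2, C2')))"

definition tphi :: "int \<Rightarrow> int \<Rightarrow> int \<Rightarrow> int \<times> int \<times> int \<times> int \<Rightarrow> int \<times> int \<times> int \<times> int" where
  "tphi D1 a a' k = (case k of (B1, B2, L1, L2) \<Rightarrow> ((a * B1) mod D1, B2, (a' * L1) mod D1, L2))"

lemma inv_mod:
  fixes a a' B D :: int
  assumes "D dvd a * a' - 1" "0 \<le> B" "B < D"
  shows "(a' * ((a * B) mod D)) mod D = B"
proof -
  have "(a' * ((a * B) mod D)) mod D = (a' * (a * B)) mod D" by (simp add: mod_mult_right_eq)
  also have "\<dots> = ((a * a') * B) mod D" by (simp add: ac_simps)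
  also have "\<dots> = (1 * B) mod D"
  proof -
    have "(a * a') mod D = 1 mod D" using assms(1) by (simp add: mod_eq_dvd_iff)
    then show ?thesis by (metis mod_mult_left_eq)
  qed
  finally show ?thesis using assms by simp
qed

lemma tmap_props:
  assumes D: "D1 > 0" "D2 > 0" and aa: "D1 dvd a * a' - 1" and x: "(B1, C1, B2, C2) \<in> kl_index D1 D2"
  shows "tmap D1 D2 a (B1, C1, B2, C2) \<in> kl_index D1 D2"
    "key D1 D2 (tmap D1 D2 a (B1, C1, B2, C2)) = tphi D1 a a' (key D1 D2 (B1, C1, B2, C2))"
proof -
  have r: "0 \<le> B1" "B1 < D1" "0 \<le> C1" "C1 < D1" "0 \<le> B2" "B2 < D2" "0 \<le> C2" "C2 < D2"
    and g1: "gcd B1 (gcd C1 D1) = 1" and g2: "gcd B2 (gcd C2 D2) = 1"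
    and cp: "D1 * D2 dvd D1 * C2 + B1 * B2 + C1 * D2" using x unfolding X_mem by auto
  define l1 where "l1 = l1f D1 D2 (B1, C1, B2, C2) mod D1"
  define l2 where "l2 = l2f D1 D2 (B1, C1, B2, C2) mod D2"
  note F = X_facts[OF x, folded l1_def l2_def]
  define s where "s = (D1 - l2 * B2) div D2"
  have f7: "D1 dvd l2 * C1 - s * B1" using F6(2)[OF _ cp F(3,4)] D unfolding s_def by simp
  define B1' where "B1' = (a * B1) mod D1"
  define C1' where "C1' = (a * C1) mod D1"
  define C2' where "C2' = (- ((B1' * B2 + C1' * D2) div D1)) mod D2"
  have tm: "tmap D1 D2 a (B1, C1, B2, C2) = (B1', C1', B2, C2')"
    unfolding tmap_def Let_def B1'_def C1'_def C2'_def by simp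
  have eB: "B1' = a * B1 - (a * B1) div D1 * D1" unfolding B1'_def by (rule mod_eq_sub)
  have eC: "C1' = a * C1 - (a * C1) div D1 * D1" unfolding C1'_def by (rule mod_eq_sub)
  have "D1 dvd D1 * C2 + B1 * B2 + C1 * D2" using cp by (rule dvd_mult_left)
  then have c1: "D1 dvd B1 * B2 + C1 * D2" by (metis add.assoc dvd_add_right_iff dvd_triv_left)
  have W: "D1 dvd B1' * B2 + C1' * D2"
  proof -
    have "B1' * B2 + C1' * D2 = a * (B1 * B2 + C1 * D2) - D1 * ((a * B1) div D1 * B2 + (a * C1) div D1 * D2)"
      by (simp only: eB eC) (simp add: algebra_simps)
    then show ?thesis using c1 by (metis dvd_diff dvd_mult dvd_triv_left)
  qed
  note CC = constr_C2[OF W D(2), folded C2'_def]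
  have rB: "0 \<le> B1'" "B1' < D1" "0 \<le> C1'" "C1' < D1" unfolding B1'_def C1'_def using D by auto
  have g1': "gcd B1' (gcd C1' D1) = 1"
  proof -
    define d where "d = gcd B1' (gcd C1' D1)"
    have dB: "d dvd B1'" and dC: "d dvd C1'" and dD: "d dvd D1" unfolding d_def
      by (meson dvd_trans gcd_dvd1 gcd_dvd2)+
    have daB: "d dvd a * B1" using dB dD eB by (metis dvd_add dvd_mult diff_add_cancel)
    have daC: "d dvd a * C1" using dC dD eC by (metis dvd_add dvd_mult diff_add_cancel)
    have daa: "d dvd a * a' - 1" using dD aa by (rule dvd_trans)
    have "B1 = a' * (a * B1) - (a * a' - 1) * B1" by (simp add: algebra_simps)
    then have "d dvd B1" using daB daa by (metis dvd_diff dvd_mult dvd_mult2)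
    moreover have "C1 = a' * (a * C1) - (a * a' - 1) * C1" by (simp add: algebra_simps)
    then have "d dvd C1" using daC daa by (metis dvd_diff dvd_mult dvd_mult2)
    ultimately have "d dvd gcd B1 (gcd C1 D1)" using dD by simp
    then have "d dvd 1" using g1 by simp
    moreover have "d \<ge> 0" unfolding d_def by simp
    ultimately show ?thesis unfolding d_def by simp
  qed
  have cp': "D1 * D2 dvd D1 * C2' + B1' * B2 + C1' * D2" using CC(1) by (simp add: add.assoc)
  have f7': "D1 dvd l2 * C1' - s * B1'"
  proof -
    have "l2 * C1' - s * B1' = a * (l2 * C1 - s * B1) - D1 * (l2 * ((a * C1) div D1) - s * ((a * B1) div D1))"
      by (simp only: eB eC) (simp add: algebra_simps)
    then show ?thesis using f7 by (metis dvd_diff dvd_mult dvd_triv_left)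
  qed
  have f4': "D2 dvd l2 * C2' + B1'"
    using lam2_constr[of D1 D2 C2' B1' B2 C1' l2] D cp' F(3) f7' unfolding s_def by simp
  have g2': "gcd B2 (gcd C2' D2) = 1" using d2_lemma[OF _ g1' cp' F(3) f4'] D by simp
  show "tmap D1 D2 a (B1, C1, B2, C2) \<in> kl_index D1 D2"
    unfolding tm X_mem using rB r CC(2,3) g1' g2' cp' by simp
  define mu where "mu = (a' * l1) mod D1"
  have emu: "mu = a' * l1 - (a' * l1) div D1 * D1" unfolding mu_def by (rule mod_eq_sub)
  have k1: "l1f D1 D2 (B1', C1', B2, C2') mod D1 = mu"
  proof (rule key_l1[OF g1'])
    show "0 \<le> mu" "mu < D1" unfolding mu_def using D by auto
    have "mu * B1' - D2 = (a * a') * (l1 * B1 - D2) + (a * a' - 1) * D2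
        - D1 * ((a' * l1) div D1 * B1' + a' * l1 * ((a * B1) div D1))"
      by (simp only: emu eB) (simp add: algebra_simps)
    moreover have "D1 dvd (a * a') * (l1 * B1 - D2) + (a * a' - 1) * D2
        - D1 * ((a' * l1) div D1 * B1' + a' * l1 * ((a * B1) div D1))"
      by (rule dvd_diff[OF dvd_add[OF dvd_mult[OF F(1)] dvd_mult2[OF aa]] dvd_triv_left])
    ultimately show "D1 dvd mu * B1' - D2" by simp
    have "mu * C1' + B2 = (a * a') * (l1 * C1 + B2) - (a * a' - 1) * B2
        - D1 * ((a' * l1) div D1 * C1' + a' * l1 * ((a * C1) div D1))"
      by (simp only: emu eC) (simp add: algebra_simps)
    moreover have "D1 dvd (a * a') * (l1 * C1 + B2) - (a * a' - 1) * B2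
        - D1 * ((a' * l1) div D1 * C1' + a' * l1 * ((a * C1) div D1))"
      by (rule dvd_diff[OF dvd_diff[OF dvd_mult[OF F(2)] dvd_mult2[OF aa]] dvd_triv_left])
    ultimately show "D1 dvd mu * C1' + B2" by simp
  qed
  have k2: "l2f D1 D2 (B1', C1', B2, C2') mod D2 = l2"
  proof (rule key_l2[OF g2'])
    show "0 \<le> l2" "l2 < D2" unfolding l2_def using D by auto
    show "D2 dvd l2 * B2 - D1" by (rule F(3))
    show "D2 dvd l2 * C2' + B1'" by (rule f4')
  qed
  show "key D1 D2 (tmap D1 D2 a (B1, C1, B2, C2)) = tphi D1 a a' (key D1 D2 (B1, C1, B2, C2))"
    unfolding tm key_def tphi_def using k1 k2 by (simp add: mu_def l1_def l2_def B1'_def)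
qed



lemma tphi_bij:
  assumes aa: "D1 dvd a * a' - 1"
  shows "bij_betw (tphi D1 a a') (KK D1 D2) (KK D1 D2)"
proof (rule bij_betw_byWitness[where f' = "tphi D1 a' a"])
  have aa': "D1 dvd a' * a - 1" using aa by (simp add: mult.commute)
  show "\<forall>k\<in>KK D1 D2. tphi D1 a' a (tphi D1 a a' k) = k"
    unfolding KK_def tphi_def using inv_mod[OF aa] inv_mod[OF aa'] by auto
  show "\<forall>k\<in>KK D1 D2. tphi D1 a a' (tphi D1 a' a k) = k"
    unfolding KK_def tphi_def using inv_mod[OF aa] inv_mod[OF aa'] by auto
  show "tphi D1 a a' ` KK D1 D2 \<subseteq> KK D1 D2"
    unfolding KK_def tphi_def by (auto simp: pos_mod_sign pos_mod_bound dest: gr_implies_not0)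
  show "tphi D1 a' a ` KK D1 D2 \<subseteq> KK D1 D2"
    unfolding KK_def tphi_def by (auto simp: pos_mod_sign pos_mod_bound dest: gr_implies_not0)
qed

lemma torus_le:
  assumes D: "D1 > 0" "D2 > 0" and aa: "D1 dvd a * a' - 1"
  shows "card {x\<in>kl_index D1 D2. key D1 D2 x = k} \<le> card {x\<in>kl_index D1 D2. key D1 D2 x = tphi D1 a a' k}"
proof (rule card_inj_on_le[where f = "tmap D1 D2 a"])
  show "finite {x\<in>kl_index D1 D2. key D1 D2 x = tphi D1 a a' k}" using X_finite by simp
  show "tmap D1 D2 a ` {x\<in>kl_index D1 D2. key D1 D2 x = k} \<subseteq> {x\<in>kl_index D1 D2. key D1 D2 x = tphi D1 a a' k}"
  proof (rule image_subsetI)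
    fix x assume xm: "x \<in> {x\<in>kl_index D1 D2. key D1 D2 x = k}"
    obtain B1 C1 B2 C2 where xe: "x = (B1, C1, B2, C2)" by (cases x) auto
    have x: "(B1, C1, B2, C2) \<in> kl_index D1 D2" and kx: "key D1 D2 (B1, C1, B2, C2) = k"
      using xm xe by auto
    show "tmap D1 D2 a x \<in> {x\<in>kl_index D1 D2. key D1 D2 x = tphi D1 a a' k}"
      using tmap_props[OF D aa x] kx xe by simp
  qed
  show "inj_on (tmap D1 D2 a) {x\<in>kl_index D1 D2. key D1 D2 x = k}"
  proof (rule inj_onI)
    fix xx yy assume xm: "xx \<in> {x\<in>kl_index D1 D2. key D1 D2 x = k}"
      and ym: "yy \<in> {x\<in>kl_index D1 D2. key D1 D2 x = k}" and eq0: "tmap D1 D2 a xx = tmap D1 D2 a yy"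
    obtain B1 C1 B2 C2 where xe: "xx = (B1, C1, B2, C2)" by (cases xx) auto
    obtain B1y C1y B2y C2y where ye: "yy = (B1y, C1y, B2y, C2y)" by (cases yy) auto
    have x: "(B1, C1, B2, C2) \<in> kl_index D1 D2" and y: "(B1y, C1y, B2y, C2y) \<in> kl_index D1 D2"
      and eq: "tmap D1 D2 a (B1, C1, B2, C2) = tmap D1 D2 a (B1y, C1y, B2y, C2y)"
      using xm ym xe ye eq0 by auto
    have rx: "0 \<le> B1" "B1 < D1" "0 \<le> C1" "C1 < D1" using x unfolding X_mem by auto
    have ry: "0 \<le> B1y" "B1y < D1" "0 \<le> C1y" "C1y < D1" using y unfolding X_mem by auto
    have e1: "(a * B1) mod D1 = (a * B1y) mod D1" and e2: "(a * C1) mod D1 = (a * C1y) mod D1"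
      and e3: "B2 = B2y" using eq unfolding tmap_def Let_def by auto
    have b1: "B1 = B1y" using inv_mod[OF aa rx(1,2)] inv_mod[OF aa ry(1,2)] e1 by metis
    have c1: "C1 = C1y" using inv_mod[OF aa rx(3,4)] inv_mod[OF aa ry(3,4)] e2 by metis
    have y': "(B1, C1y, B2, C2y) \<in> kl_index D1 D2" using y b1 e3 by simp
    have "C2 = C2y" by (rule fiber_eq[OF D x y' c1])
    then show "xx = yy" using xe ye b1 c1 e3 by simp
  qed
qed

lemma hsum_torus:
  assumes "D1 > 0" "D2 > 0" "D1 dvd a * a' - 1"
  shows "hsum D1 D2 h = hsum D1 D2 (\<lambda>k. h (tphi D1 a a' k))"
  by (rule hsum_phi[OF assms(1,2) tphi_bij[OF assms(3)] torus_le[OF assms]])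

definition swp :: "int \<times> int \<times> int \<times> int \<Rightarrow> int \<times> int \<times> int \<times> int" where
  "swp x = (case x of (B1, C1, B2, C2) \<Rightarrow> (B2, C2, B1, C1))"

lemma swp_bij: "bij_betw swp (kl_index D1 D2) (kl_index D2 D1)"
proof (rule bij_betw_byWitness[where f' = swp])
  have m: "x \<in> kl_index D1 D2 \<Longrightarrow> swp x \<in> kl_index D2 D1" for x D1 D2
  proof -
    assume "x \<in> kl_index D1 D2"
    moreover obtain B1 C1 B2 C2 where "x = (B1, C1, B2, C2)" by (cases x) auto
    ultimately show ?thesis unfolding swp_def by (simp add: X_mem ac_simps)
  qed
  show "\<forall>a\<in>kl_index D1 D2. swp (swp a) = a" by (auto simp: swp_def)
  show "\<forall>a\<in>kl_index D2 D1. swp (swp a) = a" by (auto simp: swp_def)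
  show "swp ` kl_index D1 D2 \<subseteq> kl_index D2 D1" using m by auto
  show "swp ` kl_index D2 D1 \<subseteq> kl_index D1 D2" using m by auto
qed

lemma hsum_swap:
  "hsum D2 D1 h = hsum D1 D2 (\<lambda>(B1, B2, L1, L2). h (B2, B1, L2, L1))"
proof -
  have "hsum D2 D1 h = (\<Sum>x\<in>kl_index D1 D2. h (key D2 D1 (swp x)))"
    unfolding hsum_def using sum.reindex_bij_betw[OF swp_bij, of "\<lambda>y. h (key D2 D1 y)"] by simp
  also have "\<dots> = hsum D1 D2 (\<lambda>(B1, B2, L1, L2). h (B2, B1, L2, L1))"
    unfolding hsum_def
    by (rule sum.cong) (auto simp: swp_def key_def l1f_def l2f_def split: prod.splits)
  finally show ?thesis .
qed



lemma kl3_eq: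
  "kl3 m1 m2 n1 n2 D1 D2 = (\<Sum>x\<in>kl_index D1 D2.
      ee (of_int (m1 * fst x + n1 * l1f D1 D2 x) / of_int D1) *
      ee (of_int (m2 * fst (snd (snd x)) + n2 * l2f D1 D2 x) / of_int D2))"
  unfolding kl3_def by (rule sum.cong) (auto simp: l1f_def l2f_def Let_def split: prod.splits)

lemma hat_step1:
  fixes a b t u x y D1 D2 :: int
  shows "kl3 a y x b D1 D2 * ee (of_int (- x * t) / of_int D1) * ee (of_int (- y * u) / of_int D2)
    = (\<Sum>z\<in>kl_index D1 D2. (ee (of_int (a * fst z) / of_int D1) * ee (of_int (b * l2f D1 D2 z) / of_int D2))
        * ee (of_int (x * (l1f D1 D2 z - t)) / of_int D1) * ee (of_int (y * (fst (snd (snd z)) - u)) / of_int D2))"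
  unfolding kl3_eq sum_distrib_right
proof (rule sum.cong, simp)
  fix z
  define L1 where "L1 = l1f D1 D2 z"
  define L2 where "L2 = l2f D1 D2 z"
  define B1 where "B1 = fst z"
  define B2 where "B2 = fst (snd (snd z))"
  have r: "of_int (a * B1 + x * L1) / of_int D1 + of_int (y * B2 + b * L2) / of_int D2
        + of_int (- x * t) / of_int D1 + of_int (- y * u) / of_int D2
      = of_int (a * B1) / of_int D1 + of_int (b * L2) / of_int D2
        + of_int (x * (L1 - t)) / of_int D1 + of_int (y * (B2 - u)) / (of_int D2 :: real)"
    by (simp add: add_divide_distrib diff_divide_distrib algebra_simps)
  have "ee (of_int (a * B1 + x * L1) / of_int D1 + of_int (y * B2 + b * L2) / of_int D2
        + of_int (- x * t) / of_int D1 + of_int (- y * u) / of_int D2)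
      = ee (of_int (a * B1) / of_int D1 + of_int (b * L2) / of_int D2
        + of_int (x * (L1 - t)) / of_int D1 + of_int (y * (B2 - u)) / of_int D2)"
    using r by simp
  then show "ee (of_int (a * fst z + x * l1f D1 D2 z) / of_int D1) *
       ee (of_int (y * fst (snd (snd z)) + b * l2f D1 D2 z) / of_int D2) *
       ee (of_int (- x * t) / of_int D1) * ee (of_int (- y * u) / of_int D2) =
       ee (of_int (a * fst z) / of_int D1) * ee (of_int (b * l2f D1 D2 z) / of_int D2) *
       ee (of_int (x * (l1f D1 D2 z - t)) / of_int D1) *
       ee (of_int (y * (fst (snd (snd z)) - u)) / of_int D2)"
    unfolding L1_def L2_def B1_def B2_def by (simp only: ee_add)
qed

lemma dvd_mod_sub_iff: "(D::int) dvd L mod D - t \<longleftrightarrow> D dvd L - t"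
  using dvd_mod_mult_iff'[of D L 1 t] by simp

lemma hat_eq:
  assumes D: "D1 > 0" "D2 > 0"
  shows "kl3_hat a u t b D1 D2 = hsum D1 D2 (\<lambda>(B1, B2, L1, L2).
     if D2 dvd B2 - u \<and> D1 dvd L1 - t
     then ee (of_int (a * B1) / of_int D1) * ee (of_int (b * L2) / of_int D2) else 0)"
proof -
  define X where "X = kl_index D1 D2"
  define g where "g (z::int \<times> int \<times> int \<times> int) = ee (of_int (a * fst z) / of_int D1) * ee (of_int (b * l2f D1 D2 z) / of_int D2)" for z
  define E1 where "E1 (x::int) (z::int \<times> int \<times> int \<times> int) = ee (of_int (x * (l1f D1 D2 z - t)) / of_int D1)" for x z
  define E2 where "E2 (y::int) (z::int \<times> int \<times> int \<times> int) = ee (of_int (y * (fst (snd (snd z)) - u)) / of_int D2)" for y z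
  have "kl3_hat a u t b D1 D2 = (1 / of_int (D1 * D2)) *
      (\<Sum>x\<in>{0..<D1}. \<Sum>y\<in>{0..<D2}. \<Sum>z\<in>X. g z * E1 x z * E2 y z)"
    unfolding kl3_hat_def X_def g_def E1_def E2_def hat_step1 ..
  also have "(\<Sum>x\<in>{0..<D1}. \<Sum>y\<in>{0..<D2}. \<Sum>z\<in>X. g z * E1 x z * E2 y z)
      = (\<Sum>z\<in>X. \<Sum>x\<in>{0..<D1}. \<Sum>y\<in>{0..<D2}. g z * E1 x z * E2 y z)"
  proof -
    have "(\<Sum>x\<in>{0..<D1}. \<Sum>y\<in>{0..<D2}. \<Sum>z\<in>X. g z * E1 x z * E2 y z)
        = (\<Sum>x\<in>{0..<D1}. \<Sum>z\<in>X. \<Sum>y\<in>{0..<D2}. g z * E1 x z * E2 y z)"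
      by (rule sum.cong, simp, rule sum.swap)
    also have "\<dots> = (\<Sum>z\<in>X. \<Sum>x\<in>{0..<D1}. \<Sum>y\<in>{0..<D2}. g z * E1 x z * E2 y z)"
      by (rule sum.swap)
    finally show ?thesis .
  qed
  also have "\<dots> = (\<Sum>z\<in>X. g z * (\<Sum>x\<in>{0..<D1}. E1 x z) * (\<Sum>y\<in>{0..<D2}. E2 y z))"
  proof (rule sum.cong, simp)
    fix z
    have "g z * (\<Sum>x\<in>{0..<D1}. E1 x z) * (\<Sum>y\<in>{0..<D2}. E2 y z)
        = g z * ((\<Sum>x\<in>{0..<D1}. E1 x z) * (\<Sum>y\<in>{0..<D2}. E2 y z))" by (simp only: mult.assoc)
    also have "\<dots> = g z * (\<Sum>x\<in>{0..<D1}. \<Sum>y\<in>{0..<D2}. E1 x z * E2 y z)" by (simp only: sum_product)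
    also have "\<dots> = (\<Sum>x\<in>{0..<D1}. \<Sum>y\<in>{0..<D2}. g z * (E1 x z * E2 y z))" by (simp add: sum_distrib_left)
    finally show "(\<Sum>x\<in>{0..<D1}. \<Sum>y\<in>{0..<D2}. g z * E1 x z * E2 y z)
        = g z * (\<Sum>x\<in>{0..<D1}. E1 x z) * (\<Sum>y\<in>{0..<D2}. E2 y z)" by (simp add: mult.assoc)
  qed
  also have "\<dots> = (\<Sum>z\<in>X. g z * (if D1 dvd l1f D1 D2 z - t then of_int D1 else 0)
                            * (if D2 dvd fst (snd (snd z)) - u then of_int D2 else 0))"
    by (simp only: E1_def E2_def orth[OF D(1)] orth[OF D(2)])
  finally have "kl3_hat a u t b D1 D2 = (\<Sum>z\<in>X. (1 / of_int (D1 * D2)) * (g z * (if D1 dvd l1f D1 D2 z - t then of_int D1 else 0)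
                            * (if D2 dvd fst (snd (snd z)) - u then of_int D2 else 0)))"
    by (simp add: sum_distrib_left)
  also have "\<dots> = (\<Sum>z\<in>X. if D2 dvd fst (snd (snd z)) - u \<and> D1 dvd l1f D1 D2 z - t then g z else 0)"
    by (rule sum.cong, simp) (use D in auto)
  also have "\<dots> = hsum D1 D2 (\<lambda>(B1, B2, L1, L2).
     if D2 dvd B2 - u \<and> D1 dvd L1 - t
     then ee (of_int (a * B1) / of_int D1) * ee (of_int (b * L2) / of_int D2) else 0)"
    unfolding hsum_def X_def
  proof (rule sum.cong, simp)
    fix z :: "int \<times> int \<times> int \<times> int"
    obtain B1 C1 B2 C2 where ze: "z = (B1, C1, B2, C2)" by (cases z) auto
    have e: "ee (of_int (b * (l2f D1 D2 z mod D2)) / of_int D2) = ee (of_int (b * l2f D1 D2 z) / of_int D2)"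
      by (rule ee_cong[OF D(2)]) (simp add: cong_def mod_mult_right_eq)
    show "(if D2 dvd fst (snd (snd z)) - u \<and> D1 dvd l1f D1 D2 z - t then g z else 0) =
        (case key D1 D2 z of (B1, B2, L1, L2) \<Rightarrow>
          if D2 dvd B2 - u \<and> D1 dvd L1 - t
          then ee (of_int (a * B1) / of_int D1) * ee (of_int (b * L2) / of_int D2) else 0)"
      unfolding g_def using e by (simp add: ze key_def dvd_mod_sub_iff)
  qed
  finally show ?thesis .
qed



lemma hat_torus:
  assumes D: "D1 > 0" "D2 > 0" and aa: "D1 dvd a * a' - 1"
  shows "kl3_hat a v t 1 D1 D2 = kl3_hat 1 v (a' * t) 1 D1 D2"
proof -
  have fe: "(\<lambda>k. (\<lambda>(B1, B2, L1, L2). if D2 dvd B2 - v \<and> D1 dvd L1 - a' * t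
          then ee (of_int (1 * B1) / of_int D1) * ee (of_int (1 * L2) / of_int D2) else 0) (tphi D1 a a' k))
      = (\<lambda>(B1, B2, L1, L2). if D2 dvd B2 - v \<and> D1 dvd L1 - t
          then ee (of_int (a * B1) / of_int D1) * ee (of_int (1 * L2) / of_int D2) else 0)"
  proof (rule ext, clarify)
    fix B1 B2 L1 L2 :: int
    have c: "D1 dvd (a' * L1) mod D1 - a' * t \<longleftrightarrow> D1 dvd L1 - t"
    proof -
      have "D1 dvd (a' * L1) mod D1 - a' * t \<longleftrightarrow> D1 dvd a' * (L1 - t)"
        using dvd_mod_sub_iff[of D1 "a' * L1" "a' * t"] by (simp add: algebra_simps)
      also have "\<dots> \<longleftrightarrow> D1 dvd L1 - t"
      proof
        assume h: "D1 dvd a' * (L1 - t)"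
        have "L1 - t = a * (a' * (L1 - t)) - (a * a' - 1) * (L1 - t)" by (simp add: algebra_simps)
        then show "D1 dvd L1 - t" using h aa by (metis dvd_diff dvd_mult dvd_mult2)
      qed simp
      finally show ?thesis .
    qed
    have e: "ee (of_int (1 * ((a * B1) mod D1)) / of_int D1) = ee (of_int (a * B1) / of_int D1)"
      using ee_mod[OF D(1), of "a * B1"] by simp
    show "(case tphi D1 a a' (B1, B2, L1, L2) of (B1, B2, L1, L2) \<Rightarrow>
            if D2 dvd B2 - v \<and> D1 dvd L1 - a' * t
            then ee (of_int (1 * B1) / of_int D1) * ee (of_int (1 * L2) / of_int D2) else 0) =
          (if D2 dvd B2 - v \<and> D1 dvd L1 - t
           then ee (of_int (a * B1) / of_int D1) * ee (of_int (1 * L2) / of_int D2) else 0)"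
      unfolding tphi_def using c e by simp
  qed
  show ?thesis
    unfolding hat_eq[OF D] hsum_torus[OF D aa, of "\<lambda>(B1, B2, L1, L2). if D2 dvd B2 - v \<and> D1 dvd L1 - a' * t
          then ee (of_int (1 * B1) / of_int D1) * ee (of_int (1 * L2) / of_int D2) else 0"] fe ..
qed

lemma hat_period:
  assumes D: "D1 > 0" "D2 > 0"
  shows "kl3_hat a v (t mod D1) b D1 D2 = kl3_hat a v t b D1 D2"
proof -
  have "\<And>L1. D1 dvd L1 - t mod D1 \<longleftrightarrow> D1 dvd L1 - t"
    by (metis mod_eq_dvd_iff mod_mod_trivial)
  then show ?thesis unfolding hat_eq[OF D] by simp
qed

lemma hat_dual:
  assumes D: "D1 > 0" "D2 > 0"
  shows "kl3_hat 1 t w 1 D2 D1 = kl3_hat 1 w t 1 D1 D2"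
proof -
  have "kl3_hat 1 t w 1 D2 D1 = hsum D2 D1 (\<lambda>(B1, B2, L1, L2).
     if D1 dvd B2 - t \<and> D2 dvd L1 - w
     then ee (of_int (1 * B1) / of_int D2) * ee (of_int (1 * L2) / of_int D1) else 0)"
    by (rule hat_eq[OF D(2,1)])
  also have "\<dots> = hsum D1 D2 (\<lambda>(B1, B2, L1, L2).
     if D1 dvd B1 - t \<and> D2 dvd L2 - w
     then ee (of_int (1 * B2) / of_int D2) * ee (of_int (1 * L1) / of_int D1) else 0)"
    by (subst hsum_swap) (rule arg_cong[where f = "hsum D1 D2"], auto)
  also have "\<dots> = hsum D1 D2 (\<lambda>(B1, B2, L1, L2).
     if D1 dvd L1 - t \<and> D2 dvd B2 - w
     then ee (of_int (1 * L2) / of_int D2) * ee (of_int (1 * B1) / of_int D1) else 0)"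
    by (subst hsum_dual[OF D]) (rule arg_cong[where f = "hsum D1 D2"], auto)
  also have "\<dots> = kl3_hat 1 w t 1 D1 D2"
    unfolding hat_eq[OF D] by (rule arg_cong[where f = "hsum D1 D2"]) (auto simp: mult.commute)
  finally show ?thesis .
qed

lemma P_torus:
  assumes D: "D1 > 0" "D2 > 0" and co: "coprime a D1"
  shows "(\<Sum>t\<in>{0..<D1}. cmod (kl3_hat a w t 1 D1 D2)) = (\<Sum>t\<in>{0..<D1}. cmod (kl3_hat 1 w t 1 D1 D2))"
proof -
  obtain a' where "[a * a' = 1] (mod D1)" using cong_solve_coprime_int[OF co] by blast
  then have aa: "D1 dvd a * a' - 1" by (simp add: cong_iff_dvd_diff)
  have aa': "D1 dvd a' * a - 1" using aa by (simp add: mult.commute)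
  have bij: "bij_betw (\<lambda>t. (a' * t) mod D1) {0..<D1} {0..<D1}"
  proof (rule bij_betw_byWitness[where f' = "\<lambda>t. (a * t) mod D1"])
    show "\<forall>t\<in>{0..<D1}. (a * ((a' * t) mod D1)) mod D1 = t" using inv_mod[OF aa'] by auto
    show "\<forall>t\<in>{0..<D1}. (a' * ((a * t) mod D1)) mod D1 = t" using inv_mod[OF aa] by auto
    show "(\<lambda>t. (a' * t) mod D1) ` {0..<D1} \<subseteq> {0..<D1}" using D by auto
    show "(\<lambda>t. (a * t) mod D1) ` {0..<D1} \<subseteq> {0..<D1}" using D by auto
  qed
  have "(\<Sum>t\<in>{0..<D1}. cmod (kl3_hat a w t 1 D1 D2)) = (\<Sum>t\<in>{0..<D1}. cmod (kl3_hat 1 w ((a' * t) mod D1) 1 D1 D2))"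
    using hat_torus[OF D aa] hat_period[OF D] by simp
  also have "\<dots> = (\<Sum>t\<in>{0..<D1}. cmod (kl3_hat 1 w t 1 D1 D2))"
    using sum.reindex_bij_betw[OF bij, of "\<lambda>t. cmod (kl3_hat 1 w t 1 D1 D2)"] .
  finally show ?thesis .
qed

theorem lemma5:
  fixes u D1 D2 :: int
  assumes "D1 > 0" and "D2 > 0"
  shows "RR' u D1 D2 = RR u D2 D1"
proof -
  note D = assms
  define P where "P a b = (\<Sum>t\<in>{0..<D1}. cmod (kl3_hat a (b * u) t 1 D1 D2))" for a b
  define Q where "Q a b = (\<Sum>v\<in>{0..<D1}. cmod (kl3_hat a v (b * u) 1 D2 D1))" for a b
  have P1: "P a b = P 1 b" if "coprime a D1" for a b unfolding P_def by (rule P_torus[OF D that])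
  have PQ: "P 1 b = Q 1 b" for b unfolding P_def Q_def by (rule sum.cong) (simp_all add: hat_dual[OF D])
  have Q1: "coprime a D2 \<Longrightarrow> \<exists>a''. coprime a'' D2 \<and> Q a b = Q 1 (a'' * b)" for a b
  proof -
    assume co: "coprime a D2"
    obtain a'' where "[a * a'' = 1] (mod D2)" using cong_solve_coprime_int[OF co] by blast
    then have aa: "D2 dvd a * a'' - 1" by (simp add: cong_iff_dvd_diff)
    have "[a'' * a = 1] (mod D2)" using \<open>[a * a'' = 1] (mod D2)\<close> by (simp add: mult.commute)
    then have "coprime a'' D2" using coprime_iff_invertible_int by blast
    moreover have "Q a b = Q 1 (a'' * b)"
      unfolding Q_def using hat_torus[OF D(2,1) aa] by (simp add: mult.assoc)
    ultimately show ?thesis by blast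
  qed
  have "{P a b | a b. coprime a D1 \<and> coprime b D2} = {Q a b | a b. coprime a D2 \<and> coprime b D2}"
  proof (intro equalityI subsetI)
    fix x assume "x \<in> {P a b | a b. coprime a D1 \<and> coprime b D2}"
    then obtain a b where "coprime a D1" "coprime b D2" "x = P a b" by blast
    then have "x = Q 1 b" using P1 PQ by simp
    then show "x \<in> {Q a b | a b. coprime a D2 \<and> coprime b D2}" using \<open>coprime b D2\<close> by fastforce
  next
    fix x assume "x \<in> {Q a b | a b. coprime a D2 \<and> coprime b D2}"
    then obtain a b where co: "coprime a D2" "coprime b D2" "x = Q a b" by blast
    then obtain a'' where "coprime a'' D2" "x = Q 1 (a'' * b)" using Q1 by blast
    then have "x = P 1 (a'' * b)" "coprime (a'' * b) D2" using PQ co by simp_all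
    then show "x \<in> {P a b | a b. coprime a D1 \<and> coprime b D2}" by fastforce
  qed
  then show ?thesis unfolding RR'_def RR_def P_def Q_def by simp
qed


end
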